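(* Let $\mathcal Y\subset\mathbb R^d$ be finite with no element a strict convex combination of other elements, $Y$ the $d\times|\mathcal Y|$ matrix with columns $y\in\mathcal Y$, $\kappa>0$, $\xi_1,\dots,\xi_N$ noise samples, $c:\mathcal Y\times\Xi\to\mathbb R$ a cost and $\gamma_i=\gamma(\xi_i)=(c(y,\xi_i))_{y\in\mathcal Y}$. Let $\Omega_\Delta$ be a proper l.s.c. convex function with domain $\Delta^{\mathcal Y}$ whose restriction to the affine hull of $\Delta^{\mathcal Y}$ is Legendre-type, and assume $\Omega_\Delta$ is $L$-strongly convex, meaning that $\nabla\Omega_\Delta^*$ is $\frac1L$-Lipschitz continuous with respect to the Euclidean norm $\|\cdot\|$. Let $R_\Delta(q;\xi)=\langle\gamma(\xi)|q\rangle$, $\underline{S}(\theta;\xi)=\min_{q\in\Delta^{\mathcal Y}}\big[\langle\gamma(\xi)|q\rangle+\kappa\mathcal L_{\Omega_\Delta}(Y^\top\theta;q)\big]$, $\underline{\mathcal S_N}(\theta)=\frac1N\sum_i\underline S(\theta;\xi_i)$ and $\mathcal R_N(\theta)=\frac1N\sum_iR_\Delta(\nabla\Omega_\Delta^*(Y^\top\theta);\xi_i)$. Then for every $\theta\in\mathbb R^d$ and $i\in[N]$, $$\big|R_\Delta(\nabla\Omega_\Delta^*(Y^\top\theta);\xi_i)-\underline S(\theta;\xi_i)\big|\le\frac{3\|\gamma_i\|^2}{2L\kappa},\qquad |\underline{\mathcal S_N}(\theta)-\mathcal R_N(\theta)|\le\frac{3}{2NL\kappa}\sum_{i=1}^N\|\gamma_i\|^2,$$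 and for any $\theta_{\mathcal S}\in\operatorname{argmin}_\theta\underline{\mathcal S_N}(\theta)$ and $\theta_{\mathcal R}\in\operatorname{argmin}_\theta\mathcal R_N(\theta)$, $$\mathcal R_N(\theta_{\mathcal S})-\mathcal R_N(\theta_{\mathcal R})\le\frac{3}{L\kappa N}\sum_{i=1}^N\|\gamma_i\|^2.$$
   Context: $\Delta^{\mathcal Y}=\{q\in\mathbb R^{\mathcal Y}:q\ge0,\sum_yq_y=1\}$. Legendre-type: strictly convex on the interior of its domain, differentiable there with nonempty interior, and gradient norm tending to $+\infty$ at the boundary of the domain (for the restriction to an affine subspace, with respect to that subspace's metric). $\Omega_\Delta^*$ is the Fenchel conjugate and $\mathcal L_{\Omega_\Delta}(s;q)=\Omega_\Delta(q)+\Omega^*_\Delta(s)-\langle s|q\rangle$ is the Fenchel–Young loss. *)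

theory Defs
  imports "HOL-Analysis.Analysis" "HOL-Library.Liminf_Limsup"
begin

definition prob_simplex :: "(real^'y::finite) set" where
  "prob_simplex = {q. (\<forall>y. 0 \<le> q $ y) \<and> (\<Sum>y\<in>UNIV. q $ y) = 1}"

definition edom :: "('a \<Rightarrow> ereal) \<Rightarrow> 'a set" where
  "edom f = {x. f x \<noteq> \<infinity>}"

definition proper_fun :: "('a \<Rightarrow> ereal) \<Rightarrow> bool" where
  "proper_fun f \<longleftrightarrow> (\<forall>x. f x \<noteq> -\<infinity>) \<and> (\<exists>x. f x \<noteq> \<infinity>)"

definition ereal_convex :: "('a::real_vector \<Rightarrow> ereal) \<Rightarrow> bool" where
  "ereal_convex f \<longleftrightarrow> (\<forall>x y t. 0 \<le> t \<and> t \<le> 1 \<longrightarrow>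
      f (t *\<^sub>R x + (1 - t) *\<^sub>R y) \<le> ereal t * f x + ereal (1 - t) * f y)"

definition lsc_fun :: "('a::topological_space \<Rightarrow> ereal) \<Rightarrow> bool" where
  "lsc_fun f \<longleftrightarrow> (\<forall>x. f x \<le> Liminf (at x) f)"

definition rel_int_in :: "'a::metric_space set \<Rightarrow> 'a set \<Rightarrow> 'a set" where
  "rel_int_in A D = {x\<in>D. \<exists>e>0. \<forall>z\<in>A. dist z x < e \<longrightarrow> z \<in> D}"

definition tangent_space :: "'a::real_vector set \<Rightarrow> 'a set" where
  "tangent_space A = {x - y | x y. x \<in> A \<and> y \<in> A}"

definition grad_in :: "('a::real_inner \<Rightarrow> ereal) \<Rightarrow> 'a set \<Rightarrow> 'a \<Rightarrow> 'a" where
  "grad_in f A x = (THE g. g \<in> tangent_space A \<and>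
      ((\<lambda>z. real_of_ereal (f z)) has_derivative (\<lambda>v. g \<bullet> v)) (at x within A))"

definition legendre_on :: "('a::real_inner \<Rightarrow> ereal) \<Rightarrow> 'a set \<Rightarrow> bool" where
  "legendre_on f A \<longleftrightarrow>
    (let D = A \<inter> edom f; I = rel_int_in A D in
      I \<noteq> {} \<and>
      (\<forall>x\<in>I. \<forall>y\<in>I. \<forall>t. x \<noteq> y \<and> 0 < t \<and> t < 1 \<longrightarrow>
          f (t *\<^sub>R x + (1 - t) *\<^sub>R y) < ereal t * f x + ereal (1 - t) * f y) \<and>
      (\<forall>x\<in>I. \<exists>g\<in>tangent_space A.
          ((\<lambda>z. real_of_ereal (f z)) has_derivative (\<lambda>v. g \<bullet> v)) (at x within A)) \<and>
      (\<forall>xs b. (\<forall>k. xs k \<in> I) \<longrightarrow> xs \<longlonglongrightarrow> b \<longrightarrow> b \<notin> I \<longrightarrow>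
          filterlim (\<lambda>k. norm (grad_in f A (xs k))) at_top sequentially))"

definition fconj :: "('a::real_inner \<Rightarrow> ereal) \<Rightarrow> 'a \<Rightarrow> ereal" where
  "fconj f s = (SUP x. ereal (s \<bullet> x) - f x)"

definition fy_loss :: "('a::real_inner \<Rightarrow> ereal) \<Rightarrow> 'a \<Rightarrow> 'a \<Rightarrow> ereal" where
  "fy_loss f s q = f q + fconj f s - ereal (s \<bullet> q)"

text \<open>Cost vector gamma(xi) = (c(y,xi))_y and Y^T theta = (<y, theta>)_y.\<close>
definition cost_vec :: "('y::finite \<Rightarrow> 'x \<Rightarrow> real) \<Rightarrow> 'x \<Rightarrow> real^'y" where
  "cost_vec c x = (\<chi> y. c y x)"

definition YT :: "('y::finite \<Rightarrow> real^'d::finite) \<Rightarrow> real^'d \<Rightarrow> real^'y" where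
  "YT yv \<theta> = (\<chi> y. yv y \<bullet> \<theta>)"

definition S_lower :: "(real^'y::finite \<Rightarrow> ereal) \<Rightarrow> real \<Rightarrow> ('y \<Rightarrow> real^'d::finite)
    \<Rightarrow> ('y \<Rightarrow> 'x \<Rightarrow> real) \<Rightarrow> real^'d \<Rightarrow> 'x \<Rightarrow> real" where
  "S_lower \<Omega> \<kappa> yv c \<theta> x = real_of_ereal (INF q\<in>prob_simplex.
      ereal (cost_vec c x \<bullet> q) + ereal \<kappa> * fy_loss \<Omega> (YT yv \<theta>) q)"

end

theory Submission
  imports Defs
begin


lemma simplex_norm_le1:
  assumes "q \<in> prob_simplex" shows "norm q \<le> 1"
proof -
  have "norm q \<le> (\<Sum>i\<in>UNIV. \<bar>q$i\<bar>)" by (rule norm_le_l1_cart)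
  also have "\<dots> = (\<Sum>i\<in>UNIV. q$i)" using assms by (simp add: prob_simplex_def)
  also have "\<dots> = 1" using assms by (simp add: prob_simplex_def)
  finally show ?thesis .
qed

lemma fconj_ge:
  "ereal (s \<bullet> q) - \<Omega> q \<le> fconj \<Omega> s"
  unfolding fconj_def by (rule SUP_upper) simp

lemma fconj_inf_all:
  fixes \<Omega> :: "real^'y::finite \<Rightarrow> ereal"
  assumes dom: "edom \<Omega> = prob_simplex" and inf: "fconj \<Omega> s0 = \<infinity>"
  shows "fconj \<Omega> t = \<infinity>"
proof -
  have "fconj \<Omega> s0 \<le> fconj \<Omega> t + ereal (norm (s0 - t))"
    unfolding fconj_def[of _ s0]
  proof (rule SUP_least)
    fix x
    show "ereal (s0 \<bullet> x) - \<Omega> x \<le> fconj \<Omega> t + ereal (norm (s0 - t))"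
    proof (cases "x \<in> prob_simplex")
      case True
      then obtain w where w: "\<Omega> x \<noteq> \<infinity>" using dom by (auto simp: edom_def)
      have "s0 \<bullet> x - t \<bullet> x = (s0 - t) \<bullet> x" by (simp add: inner_diff_left)
      also have "\<dots> \<le> norm (s0 - t) * norm x" by (rule norm_cauchy_schwarz)
      also have "\<dots> \<le> norm (s0 - t)" using simplex_norm_le1[OF True]
        by (simp add: mult_left_le)
      finally have le: "s0 \<bullet> x \<le> t \<bullet> x + norm (s0 - t)" by simp
      have "ereal (s0 \<bullet> x) - \<Omega> x \<le> (ereal (t \<bullet> x) - \<Omega> x) + ereal (norm (s0 - t))"
        using le w by (cases "\<Omega> x") auto
      also have "\<dots> \<le> fconj \<Omega> t + ereal (norm (s0 - t))"
        by (rule add_right_mono[OF fconj_ge])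
      finally show ?thesis .
    next
      case False
      then have "\<Omega> x = \<infinity>" using dom by (auto simp: edom_def)
      then show ?thesis by simp
    qed
  qed
  then show ?thesis using inf by auto
qed

lemma S_lower_eq:
  fixes \<Omega> :: "real^'y::finite \<Rightarrow> ereal"
  assumes dom: "edom \<Omega> = prob_simplex" and proper: "proper_fun \<Omega>"
    and fin: "\<forall>s. fconj \<Omega> s \<noteq> \<infinity> \<and> fconj \<Omega> s \<noteq> -\<infinity>" and kp: "\<kappa> > 0"
  defines "F \<equiv> (\<lambda>s. real_of_ereal (fconj \<Omega> s))"
  shows "(INF q\<in>prob_simplex. ereal (\<gamma> \<bullet> q) + ereal \<kappa> * fy_loss \<Omega> s q)
          = ereal (\<kappa> * (F s - F (s - (1/\<kappa>) *\<^sub>R \<gamma>)))"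
proof -
  let ?h = "(1/\<kappa>) *\<^sub>R \<gamma>"
  have Fe: "fconj \<Omega> t = ereal (F t)" for t using fin[rule_format, of t] unfolding F_def
    by (cases "fconj \<Omega> t") auto
  have Oe: "\<Omega> q = ereal (real_of_ereal (\<Omega> q))" if "q \<in> prob_simplex" for q
  proof -
    have "\<Omega> q \<noteq> \<infinity>" using that dom by (auto simp: edom_def)
    moreover have "\<Omega> q \<noteq> -\<infinity>" using proper by (auto simp: proper_fun_def)
    ultimately show ?thesis by (cases "\<Omega> q") auto
  qed
  have tm: "ereal (\<gamma> \<bullet> q) + ereal \<kappa> * fy_loss \<Omega> s q
      = ereal (\<kappa> * F s - \<kappa> * ((s - ?h) \<bullet> q - real_of_ereal (\<Omega> q)))"
    if qs: "q \<in> prob_simplex" for q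
  proof -
    have "ereal (\<gamma> \<bullet> q) + ereal \<kappa> * fy_loss \<Omega> s q
       = ereal (\<gamma> \<bullet> q + \<kappa> * (real_of_ereal (\<Omega> q) + F s - s \<bullet> q))"
    proof -
      obtain w where w: "\<Omega> q = ereal w" using Oe[OF qs] by blast
      show ?thesis unfolding fy_loss_def w Fe[of s] by simp
    qed
    also have "\<dots> = ereal (\<kappa> * F s - \<kappa> * ((s - ?h) \<bullet> q - real_of_ereal (\<Omega> q)))"
      using kp by (simp add: inner_diff_left algebra_simps)
    finally show ?thesis .
  qed
  have up: "(s - ?h) \<bullet> q - real_of_ereal (\<Omega> q) \<le> F (s - ?h)" if qs: "q \<in> prob_simplex" for q
  proof -
    have "ereal ((s - ?h) \<bullet> q) - \<Omega> q \<le> fconj \<Omega> (s - ?h)" by (rule fconj_ge)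
    moreover obtain w where w: "\<Omega> q = ereal w" using Oe[OF qs] by blast
    ultimately show ?thesis using Fe[of "s - ?h"] by simp
  qed
  show ?thesis
  proof (rule antisym)
    show "ereal (\<kappa> * (F s - F (s - ?h)))
       \<le> (INF q\<in>prob_simplex. ereal (\<gamma> \<bullet> q) + ereal \<kappa> * fy_loss \<Omega> s q)"
    proof (rule INF_greatest)
      fix q :: "real^'y" assume q: "q \<in> prob_simplex"
      have "\<kappa> * ((s - ?h) \<bullet> q - real_of_ereal (\<Omega> q)) \<le> \<kappa> * F (s - ?h)"
        using up[OF q] kp by (simp add: mult_left_mono)
      then show "ereal (\<kappa> * (F s - F (s - ?h))) \<le> ereal (\<gamma> \<bullet> q) + ereal \<kappa> * fy_loss \<Omega> s q"
        unfolding tm[OF q] by (simp add: algebra_simps)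
    qed
  next
    show "(INF q\<in>prob_simplex. ereal (\<gamma> \<bullet> q) + ereal \<kappa> * fy_loss \<Omega> s q)
       \<le> ereal (\<kappa> * (F s - F (s - ?h)))"
    proof (rule ereal_le_epsilon2)
      fix e :: real assume e: "0 < e"
      have "ereal (F (s - ?h) - e / \<kappa>) < fconj \<Omega> (s - ?h)"
        using Fe[of "s - ?h"] e kp by simp
      then obtain x where x: "ereal (F (s - ?h) - e / \<kappa>) < ereal ((s - ?h) \<bullet> x) - \<Omega> x"
        unfolding fconj_def less_SUP_iff by blast
      have xs: "x \<in> prob_simplex"
      proof (rule ccontr)
        assume "x \<notin> prob_simplex"
        then have "\<Omega> x = \<infinity>" using dom by (auto simp: edom_def)
        then show False using x by simp
      qed
      have "F (s - ?h) - e / \<kappa> < (s - ?h) \<bullet> x - real_of_ereal (\<Omega> x)"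
      proof -
        obtain w where w: "\<Omega> x = ereal w" using Oe[OF xs] by blast
        show ?thesis using x unfolding w by simp
      qed
      then have "\<kappa> * (F (s - ?h) - e / \<kappa>) < \<kappa> * ((s - ?h) \<bullet> x - real_of_ereal (\<Omega> x))"
        using kp by simp
      then have lt: "\<kappa> * F s - \<kappa> * ((s - ?h) \<bullet> x - real_of_ereal (\<Omega> x)) < \<kappa> * (F s - F (s - ?h)) + e"
        using kp by (simp add: algebra_simps)
      have "(INF q\<in>prob_simplex. ereal (\<gamma> \<bullet> q) + ereal \<kappa> * fy_loss \<Omega> s q)
          \<le> ereal (\<gamma> \<bullet> x) + ereal \<kappa> * fy_loss \<Omega> s x" by (rule INF_lower[OF xs])
      also have "\<dots> \<le> ereal (\<kappa> * (F s - F (s - ?h))) + ereal e"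
        unfolding tm[OF xs] using lt by simp
      finally show "(INF q\<in>prob_simplex. ereal (\<gamma> \<bullet> q) + ereal \<kappa> * fy_loss \<Omega> s q)
          \<le> ereal (\<kappa> * (F s - F (s - ?h))) + ereal e" .
    qed
  qed
qed

lemma taylor_bound:
  fixes F :: "'a::real_inner \<Rightarrow> real"
  assumes der: "\<forall>s. (F has_derivative (\<lambda>v. G s \<bullet> v)) (at s)"
    and lip: "\<forall>s t. norm (G s - G t) \<le> (1 / L) * norm (s - t)" and L: "L > 0"
  shows "\<bar>F (s + v) - F s - G s \<bullet> v\<bar> \<le> (norm v)\<^sup>2 / L"
proof -
  define \<phi> where "\<phi> t = F (s + t *\<^sub>R v) - t * (G s \<bullet> v)" for t :: real
  have d\<phi>: "(\<phi> has_derivative (\<lambda>u. G (s + t *\<^sub>R v) \<bullet> (u *\<^sub>R v) - u * (G s \<bullet> v))) (at t)" for t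
  proof -
    have "((\<lambda>t. s + t *\<^sub>R v) has_derivative (\<lambda>u. u *\<^sub>R v)) (at t)"
      by (auto intro!: derivative_eq_intros)
    then have "((\<lambda>t. F (s + t *\<^sub>R v)) has_derivative (\<lambda>u. G (s + t *\<^sub>R v) \<bullet> (u *\<^sub>R v))) (at t)"
      using has_derivative_compose[of "\<lambda>t. s + t *\<^sub>R v" "\<lambda>u. u *\<^sub>R v" t UNIV F, OF _ der[rule_format, of "s + t *\<^sub>R v"]] by simp
    then show ?thesis unfolding \<phi>_def
      by (auto intro!: derivative_eq_intros)
  qed
  have cont: "continuous_on {0..1} \<phi>"
    using d\<phi> by (meson has_derivative_continuous continuous_at_imp_continuous_on)
  obtain t where t: "t \<in> {0<..<1}"
    and b: "norm (\<phi> 1 - \<phi> 0) \<le> norm (G (s + t *\<^sub>R v) \<bullet> ((1 - 0) *\<^sub>R v) - (1 - 0) * (G s \<bullet> v))"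
    using mvt_general[of 0 1 \<phi>, OF _ cont d\<phi>] by auto
  have "\<phi> 1 - \<phi> 0 = F (s + v) - F s - G s \<bullet> v" unfolding \<phi>_def by simp
  moreover have "G (s + t *\<^sub>R v) \<bullet> ((1 - 0) *\<^sub>R v) - (1 - 0) * (G s \<bullet> v) = (G (s + t *\<^sub>R v) - G s) \<bullet> v"
    by (simp add: inner_diff_left)
  ultimately have "\<bar>F (s + v) - F s - G s \<bullet> v\<bar> \<le> \<bar>(G (s + t *\<^sub>R v) - G s) \<bullet> v\<bar>" using b by simp
  also have "\<dots> \<le> norm (G (s + t *\<^sub>R v) - G s) * norm v" by (rule Cauchy_Schwarz_ineq2)
  also have "\<dots> \<le> ((1/L) * norm v) * norm v"
  proof (rule mult_right_mono)
    have "norm (G (s + t *\<^sub>R v) - G s) \<le> (1/L) * norm (t *\<^sub>R v)" using lip by (metis add_diff_cancel_left')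
    also have "\<dots> \<le> (1/L) * norm v" using t L by (simp, intro divide_right_mono) (auto intro: mult_left_le_one_le)
    finally show "norm (G (s + t *\<^sub>R v) - G s) \<le> (1/L) * norm v" .
  qed simp
  also have "\<dots> = (norm v)\<^sup>2 / L" by (simp add: power2_eq_square)
  finally show ?thesis .
qed

lemma aggregate:
  fixes r s :: "'t \<Rightarrow> nat \<Rightarrow> real" and g :: "nat \<Rightarrow> real" and K :: real
  assumes b: "\<forall>\<theta>. \<forall>i\<in>{1..N}. \<bar>r \<theta> i - s \<theta> i\<bar> \<le> K * g i" and K: "K \<ge> 0"
    and g: "\<forall>i. g i \<ge> 0"
  defines "SN \<equiv> (\<lambda>\<theta>. (\<Sum>i=1..N. s \<theta> i) / real N)"
    and "RN \<equiv> (\<lambda>\<theta>. (\<Sum>i=1..N. r \<theta> i) / real N)"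
  shows "\<forall>\<theta>. \<bar>SN \<theta> - RN \<theta>\<bar> \<le> K / real N * (\<Sum>i=1..N. g i)"
    and "\<forall>\<theta>S \<theta>R. (\<forall>\<theta>. SN \<theta>S \<le> SN \<theta>) \<longrightarrow> (\<forall>\<theta>. RN \<theta>R \<le> RN \<theta>) \<longrightarrow>
            RN \<theta>S - RN \<theta>R \<le> 2 * K / real N * (\<Sum>i=1..N. g i)"
proof -
  have main: "\<bar>SN \<theta> - RN \<theta>\<bar> \<le> K / real N * (\<Sum>i=1..N. g i)" for \<theta>
  proof (cases "N = 0")
    case True then show ?thesis by (simp add: SN_def RN_def)
  next
    case False
    have "\<bar>SN \<theta> - RN \<theta>\<bar> = \<bar>\<Sum>i=1..N. s \<theta> i - r \<theta> i\<bar> / real N"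
      unfolding SN_def RN_def using False
      by (simp add: sum_subtractf diff_divide_distrib[symmetric])
    also have "\<dots> \<le> (\<Sum>i=1..N. K * g i) / real N"
    proof (rule divide_right_mono)
      have "\<bar>\<Sum>i=1..N. s \<theta> i - r \<theta> i\<bar> \<le> (\<Sum>i=1..N. \<bar>s \<theta> i - r \<theta> i\<bar>)" by (rule sum_abs)
      also have "\<dots> \<le> (\<Sum>i=1..N. K * g i)"
        using b by (intro sum_mono) (metis abs_minus_commute)
      finally show "\<bar>\<Sum>i=1..N. s \<theta> i - r \<theta> i\<bar> \<le> (\<Sum>i=1..N. K * g i)" .
    qed simp
    also have "\<dots> = K / real N * (\<Sum>i=1..N. g i)" by (simp add: sum_distrib_left[symmetric] sum_divide_distrib[symmetric])
    finally show ?thesis .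
  qed
  then show "\<forall>\<theta>. \<bar>SN \<theta> - RN \<theta>\<bar> \<le> K / real N * (\<Sum>i=1..N. g i)" by blast
  show "\<forall>\<theta>S \<theta>R. (\<forall>\<theta>. SN \<theta>S \<le> SN \<theta>) \<longrightarrow> (\<forall>\<theta>. RN \<theta>R \<le> RN \<theta>) \<longrightarrow>
            RN \<theta>S - RN \<theta>R \<le> 2 * K / real N * (\<Sum>i=1..N. g i)"
  proof (intro allI impI)
    fix \<theta>S \<theta>R assume m: "\<forall>\<theta>. SN \<theta>S \<le> SN \<theta>"
    have "SN \<theta>S \<le> SN \<theta>R" using m by blast
    then show "RN \<theta>S - RN \<theta>R \<le> 2 * K / real N * (\<Sum>i=1..N. g i)"
      using main[of \<theta>S] main[of \<theta>R] by (simp add: abs_le_iff)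
  qed
qed

theorem theorem2:
  fixes yv :: "'y::finite \<Rightarrow> real^'d::finite"
    and \<kappa> L :: real
    and N :: nat
    and \<xi> :: "nat \<Rightarrow> 'x"
    and c :: "'y \<Rightarrow> 'x \<Rightarrow> real"
    and \<Omega> :: "real^'y \<Rightarrow> ereal"
    and g\<Omega>s :: "real^'y \<Rightarrow> real^'y"
  defines "SN \<equiv> (\<lambda>\<theta>. (\<Sum>i=1..N. S_lower \<Omega> \<kappa> yv c \<theta> (\<xi> i)) / real N)"
    and "RN \<equiv> (\<lambda>\<theta>. (\<Sum>i=1..N. cost_vec c (\<xi> i) \<bullet> g\<Omega>s (YT yv \<theta>)) / real N)"
  assumes extreme: "\<forall>y. yv y \<notin> convex hull (yv ` (UNIV - {y}))"
    and kappa_pos: "\<kappa> > 0"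
    and proper: "proper_fun \<Omega>"
    and lsc: "lsc_fun \<Omega>"
    and convex: "ereal_convex \<Omega>"
    and dom: "edom \<Omega> = prob_simplex"
    and legendre: "legendre_on \<Omega> (affine hull prob_simplex)"
    and L_pos: "L > 0"
    and grad_conj: "\<forall>s. ((\<lambda>s. real_of_ereal (fconj \<Omega> s)) has_derivative (\<lambda>v. g\<Omega>s s \<bullet> v)) (at s)"
    and lipschitz: "\<forall>s t. norm (g\<Omega>s s - g\<Omega>s t) \<le> (1 / L) * norm (s - t)"
  shows "(\<forall>\<theta>. \<forall>i\<in>{1..N}.
            \<bar>cost_vec c (\<xi> i) \<bullet> g\<Omega>s (YT yv \<theta>) - S_lower \<Omega> \<kappa> yv c \<theta> (\<xi> i)\<bar>
              \<le> 3 * (norm (cost_vec c (\<xi> i)))\<^sup>2 / (2 * L * \<kappa>))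
       \<and> (\<forall>\<theta>. \<bar>SN \<theta> - RN \<theta>\<bar> \<le> 3 / (2 * real N * L * \<kappa>) * (\<Sum>i=1..N. (norm (cost_vec c (\<xi> i)))\<^sup>2))
       \<and> (\<forall>\<theta>S \<theta>R. (\<forall>\<theta>. SN \<theta>S \<le> SN \<theta>) \<longrightarrow> (\<forall>\<theta>. RN \<theta>R \<le> RN \<theta>) \<longrightarrow>
            RN \<theta>S - RN \<theta>R \<le> 3 / (L * \<kappa> * real N) * (\<Sum>i=1..N. (norm (cost_vec c (\<xi> i)))\<^sup>2))"
proof -
  let ?g = "\<lambda>i. (norm (cost_vec c (\<xi> i)))\<^sup>2"
  let ?K = "3 / (2 * L * \<kappa>)"
  let ?r = "\<lambda>\<theta> i. cost_vec c (\<xi> i) \<bullet> g\<Omega>s (YT yv \<theta>)"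
  let ?s = "\<lambda>\<theta> i. S_lower \<Omega> \<kappa> yv c \<theta> (\<xi> i)"
  have K: "?K \<ge> 0" using L_pos kappa_pos by simp
  have part1: "\<forall>\<theta>. \<forall>i\<in>{1..N}. \<bar>?r \<theta> i - ?s \<theta> i\<bar> \<le> ?K * ?g i"
  proof (cases "\<exists>s0. fconj \<Omega> s0 = \<infinity>")
    case True
    then obtain s0 where s0: "fconj \<Omega> s0 = \<infinity>" by blast
    have allinf: "fconj \<Omega> t = \<infinity>" for t by (rule fconj_inf_all[OF dom s0])
    have g0: "g\<Omega>s t = 0" for t
    proof -
      have "((\<lambda>s. real_of_ereal (fconj \<Omega> s)) has_derivative (\<lambda>v. 0)) (at t)"
        using allinf by simp
      from has_derivative_unique[OF grad_conj[rule_format, of t] this]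
      have "(\<lambda>v. g\<Omega>s t \<bullet> v) = (\<lambda>v. 0)" .
      then have "g\<Omega>s t \<bullet> g\<Omega>s t = 0" by metis
      then show ?thesis by simp
    qed
    have S0: "S_lower \<Omega> \<kappa> yv c \<theta> x = 0" for \<theta> x
    proof -
      have hinf: "ereal (cost_vec c x \<bullet> q) + ereal \<kappa> * fy_loss \<Omega> (YT yv \<theta>) q = \<infinity>" for q
      proof -
        have "\<Omega> q \<noteq> -\<infinity>" using proper by (auto simp: proper_fun_def)
        then have "fy_loss \<Omega> (YT yv \<theta>) q = \<infinity>" unfolding fy_loss_def allinf by simp
        then show ?thesis using kappa_pos by simp
      qed
      have "(INF q\<in>(prob_simplex::(real^'y) set). (\<infinity>::ereal)) = \<infinity>"
        using INF_top[where A="prob_simplex::(real^'y) set", where 'a=ereal] by (simp add: top_ereal_def)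
      then show ?thesis unfolding S_lower_def hinf by simp
    qed
    show ?thesis using K by (simp add: g0 S0)
  next
    case False
    obtain y0 :: 'y where True by blast
    define e :: "real^'y" where "e = (\<chi> y. if y = y0 then 1 else 0)"
    have e: "e \<in> prob_simplex" unfolding prob_simplex_def e_def by simp
    have efin: "\<Omega> e \<noteq> \<infinity>" using e dom by (auto simp: edom_def)
    have fin: "\<forall>s. fconj \<Omega> s \<noteq> \<infinity> \<and> fconj \<Omega> s \<noteq> -\<infinity>"
    proof
      fix s
      have "ereal (s \<bullet> e) - \<Omega> e \<le> fconj \<Omega> s" by (rule fconj_ge)
      moreover have "ereal (s \<bullet> e) - \<Omega> e \<noteq> -\<infinity>" using efin by (cases "\<Omega> e") auto
      ultimately have "fconj \<Omega> s \<noteq> -\<infinity>" by auto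
      then show "fconj \<Omega> s \<noteq> \<infinity> \<and> fconj \<Omega> s \<noteq> -\<infinity>" using False by blast
    qed
    define F where "F = (\<lambda>s. real_of_ereal (fconj \<Omega> s))"
    have der: "\<forall>s. (F has_derivative (\<lambda>v. g\<Omega>s s \<bullet> v)) (at s)" using grad_conj unfolding F_def .
    show ?thesis
    proof (intro allI ballI)
      fix \<theta> i
      let ?sv = "YT yv \<theta>" and ?\<gamma> = "cost_vec c (\<xi> i)"
      let ?h = "(1/\<kappa>) *\<^sub>R ?\<gamma>"
      have Seq: "?s \<theta> i = \<kappa> * (F ?sv - F (?sv - ?h))"
        unfolding S_lower_def S_lower_eq[OF dom proper fin kappa_pos] F_def by simp
      have tb: "\<bar>F (?sv + - ?h) - F ?sv - g\<Omega>s ?sv \<bullet> (- ?h)\<bar> \<le> (norm (- ?h))\<^sup>2 / L"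
        by (rule taylor_bound[OF der lipschitz L_pos])
      have "?r \<theta> i - ?s \<theta> i = \<kappa> * (F (?sv + - ?h) - F ?sv - g\<Omega>s ?sv \<bullet> (- ?h))"
        unfolding Seq using kappa_pos by (simp add: algebra_simps inner_commute)
      then have "\<bar>?r \<theta> i - ?s \<theta> i\<bar> = \<kappa> * \<bar>F (?sv + - ?h) - F ?sv - g\<Omega>s ?sv \<bullet> (- ?h)\<bar>"
        using kappa_pos by (simp add: abs_mult)
      also have "\<dots> \<le> \<kappa> * ((norm (- ?h))\<^sup>2 / L)"
        using mult_left_mono[OF tb, of \<kappa>] kappa_pos by simp
      also have "\<dots> = ?g i / (L * \<kappa>)"
        using kappa_pos by (simp add: power2_eq_square field_simps)
      also have "\<dots> \<le> ?K * ?g i"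
        using kappa_pos L_pos by (simp add: field_simps)
      finally show "\<bar>?r \<theta> i - ?s \<theta> i\<bar> \<le> ?K * ?g i" .
    qed
  qed
  have agg: "\<forall>\<theta>. \<bar>SN \<theta> - RN \<theta>\<bar> \<le> ?K / real N * (\<Sum>i=1..N. ?g i)"
     "\<forall>\<theta>S \<theta>R. (\<forall>\<theta>. SN \<theta>S \<le> SN \<theta>) \<longrightarrow> (\<forall>\<theta>. RN \<theta>R \<le> RN \<theta>) \<longrightarrow>
            RN \<theta>S - RN \<theta>R \<le> 2 * ?K / real N * (\<Sum>i=1..N. ?g i)"
    using aggregate[of N ?r ?s ?K ?g, OF part1 K] unfolding SN_def RN_def by auto
  have e1: "?K / real N = 3 / (2 * real N * L * \<kappa>)" by simp
  have e2: "2 * ?K / real N = 3 / (L * \<kappa> * real N)" by (simp add: field_simps)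
  show ?thesis using part1 agg unfolding e1 e2 by (simp add: mult.commute)
qed

end
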